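(* Consider $N$ agents in $\mathbb{R}^n$ with dynamics $\dot p_i=\sum_{k=1}^n u_{i,k}\,b_{i,k}$, $i=1,\ldots,N$, under the control law \[ u_{i,k}=\sqrt{\omega_{i,k}}\cos(\omega_{i,k}t+\varphi_{i,k})\,h_1(\psi_i(p))+\sqrt{\omega_{i,k}}\sin(\omega_{i,k}t+\varphi_{i,k})\,h_2(\psi_i(p)). \] For every initial condition $(t_0,p_0)\in\mathbb{R}\times\mathbb{R}^{nN}$, the closed-loop system has a unique solution defined on all of $\mathbb{R}$.
   Context: $G=(V,E)$ is an undirected graph with $V=\{1,\ldots,N\}$ and nonempty edge set $E$ of two-element subsets (edges written $ij$); $d_{ij}\geq0$ for $ij\in E$. For each $i$, $b_{i,1},\ldots,b_{i,n}$ is an orthonormal basis of $\mathbb{R}^n$. $\psi_i(p)=\frac14\sum_{j:\,ij\in E}(\|p_j-p_i\|^2-d_{ij}^2)^2$ for $p=(p_1,\ldots,p_N)\in\mathbb{R}^{nN}$. The $\omega_{i,k}$ are $nN$ pairwise distinct positive reals and $\varphi_{i,k}\in\mathbb{R}$. The functions $h_1,h_2:\mathbb{R}\to\mathbb{R}$ satisfy, for $\nu=1,2$: (i) $h_\nu(y)=0$ for $y\leq 0$; (ii) $h_\nu$ is bounded and of class $C^2$ on $(0,\infty)$; (iii) $h_\nu(y)/y$ remains bounded as $y\downarrow 0$; (iv) $h_\nu'(y)$ remains bounded as $y\downarrow0$; (v) $h_\nu''(y)\,y$ remains bounded as $y\downarrow 0$; (vi) there exist $r',c'>0$ with $h_2'(y)h_1(y)-h_1'(y)h_2(y)\leq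 -c'y$ for all $y\in(0,r']$. *)

theory Defs
  imports "HOL-Analysis.Analysis"
begin

text \<open>Agents are indexed by a finite type 'v (V = {1..N}), positions live in real^'n.
  A configuration p in R^{nN} is an element of (real^'n)^'v, with p $ i the position of agent i.\<close>

definition psi :: "'v::finite set set \<Rightarrow> ('v set \<Rightarrow> real) \<Rightarrow> 'v \<Rightarrow> (real^'n)^'v \<Rightarrow> real" where
  "psi E d i p = (1/4) * (\<Sum>j\<in>{j. {i, j} \<in> E}. (norm (p $ j - p $ i) ^ 2 - (d {i, j}) ^ 2) ^ 2)"

definition ctrl ::
  "'v::finite set set \<Rightarrow> ('v set \<Rightarrow> real) \<Rightarrow> ('v \<Rightarrow> 'n \<Rightarrow> real) \<Rightarrow> ('v \<Rightarrow> 'n \<Rightarrow> real)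
   \<Rightarrow> (real \<Rightarrow> real) \<Rightarrow> (real \<Rightarrow> real) \<Rightarrow> 'v \<Rightarrow> 'n \<Rightarrow> real \<Rightarrow> (real^'n)^'v \<Rightarrow> real" where
  "ctrl E d \<omega> \<phi> h1 h2 i k t p =
     sqrt (\<omega> i k) * cos (\<omega> i k * t + \<phi> i k) * h1 (psi E d i p)
   + sqrt (\<omega> i k) * sin (\<omega> i k * t + \<phi> i k) * h2 (psi E d i p)"

definition closed_loop ::
  "'v::finite set set \<Rightarrow> ('v set \<Rightarrow> real) \<Rightarrow> ('v \<Rightarrow> 'n::finite \<Rightarrow> real^'n) \<Rightarrow> ('v \<Rightarrow> 'n \<Rightarrow> real)
   \<Rightarrow> ('v \<Rightarrow> 'n \<Rightarrow> real) \<Rightarrow> (real \<Rightarrow> real) \<Rightarrow> (real \<Rightarrow> real) \<Rightarrow> real \<Rightarrow> (real^'n)^'v \<Rightarrow> (real^'n)^'v" where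
  "closed_loop E d b \<omega> \<phi> h1 h2 t p =
     (\<chi> i. \<Sum>k\<in>UNIV. ctrl E d \<omega> \<phi> h1 h2 i k t p *\<^sub>R b i k)"

definition admissible_h :: "(real \<Rightarrow> real) \<Rightarrow> (real \<Rightarrow> real) \<Rightarrow> (real \<Rightarrow> real) \<Rightarrow> bool" where
  "admissible_h h h' h'' \<longleftrightarrow>
     (\<forall>y\<le>0. h y = 0) \<and>
     (\<exists>M. \<forall>y>0. \<bar>h y\<bar> \<le> M) \<and>
     (\<forall>y>0. (h has_real_derivative h' y) (at y) \<and> (h' has_real_derivative h'' y) (at y)) \<and>
     continuous_on {0<..} h'' \<and>
     (\<exists>C. eventually (\<lambda>y. \<bar>h y / y\<bar> \<le> C) (at_right 0)) \<and>
     (\<exists>C. eventually (\<lambda>y. \<bar>h' y\<bar> \<le> C) (at_right 0)) \<and>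
     (\<exists>C. eventually (\<lambda>y. \<bar>h'' y * y\<bar> \<le> C) (at_right 0))"

end

theory Submission
  imports Defs
begin


lemma wdiff:
  fixes x y :: "real \<Rightarrow> 'a::euclidean_space"
  assumes "(x has_vector_derivative X) (at t within S)" "(y has_vector_derivative Y) (at t within S)"
  shows "((\<lambda>t. exp(c*t) * ((x t - y t) \<bullet> (x t - y t))) has_derivative
     (*) (exp(c*t) * c * ((x t - y t) \<bullet> (x t - y t)) + exp(c*t) * (2 * ((x t - y t) \<bullet> (X - Y))))) (at t within S)"
  using assms unfolding has_vector_derivative_def
  apply (auto intro!: derivative_eq_intros ext)
  apply (simp add: inner_diff_right inner_diff_left inner_commute[of X] inner_commute[of Y] algebra_simps)
  done

lemma inner_lip_bound:
  fixes u v :: "'a::euclidean_space"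
  assumes "norm v \<le> L * norm u"
  shows "\<bar>u \<bullet> v\<bar> \<le> L * (u \<bullet> u)"
proof -
  have "\<bar>u \<bullet> v\<bar> \<le> norm u * norm v" by (rule Cauchy_Schwarz_ineq2)
  also have "\<dots> \<le> norm u * (L * norm u)" using assms by (simp add: mult_left_mono)
  also have "\<dots> = L * (u \<bullet> u)" by (simp add: power2_norm_eq_inner[symmetric] power2_eq_square)
  finally show ?thesis .
qed

lemma deriv_cont_bound:
  fixes x :: "real \<Rightarrow> 'a::euclidean_space"
  assumes "\<And>t. t \<in> {a..b} \<Longrightarrow> (x has_vector_derivative X t) (at t within {a..b})"
  obtains R where "\<forall>t\<in>{a..b}. norm (x t) \<le> R"
proof -
  have "continuous_on {a..b} x"
    using assms by (meson continuous_on_eq_continuous_within has_vector_derivative_continuous)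
  then have "bounded (x ` {a..b})" by (intro compact_imp_bounded compact_continuous_image) auto
  then show ?thesis using that unfolding bounded_iff by auto
qed

lemma uniq_dir:
  fixes F :: "real \<Rightarrow> 'a::euclidean_space \<Rightarrow> 'a" and x y :: "real \<Rightarrow> 'a"
  assumes lip: "\<And>R. \<exists>L. \<forall>t p q. norm p \<le> R \<longrightarrow> norm q \<le> R \<longrightarrow> norm (F t p - F t q) \<le> L * norm (p - q)"
    and ab: "a < b"
    and dx: "\<And>t. t \<in> {a..b} \<Longrightarrow> (x has_vector_derivative F t (x t)) (at t within {a..b})"
    and dy: "\<And>t. t \<in> {a..b} \<Longrightarrow> (y has_vector_derivative F t (y t)) (at t within {a..b})"
  shows "x a = y a \<Longrightarrow> x b = y b" and "x b = y b \<Longrightarrow> x a = y a"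
proof -
  obtain R1 where R1: "\<forall>t\<in>{a..b}. norm (x t) \<le> R1" using deriv_cont_bound[OF dx] by blast
  obtain R2 where R2: "\<forall>t\<in>{a..b}. norm (y t) \<le> R2" using deriv_cont_bound[OF dy] by blast
  obtain L where L: "\<forall>t p q. norm p \<le> max R1 R2 \<longrightarrow> norm q \<le> max R1 R2 \<longrightarrow> norm (F t p - F t q) \<le> L * norm (p - q)"
    using lip by blast
  have key: "\<bar>(x t - y t) \<bullet> (F t (x t) - F t (y t))\<bar> \<le> L * ((x t - y t) \<bullet> (x t - y t))" if "t \<in> {a..b}" for t
    using that R1 R2 L by (intro inner_lip_bound) (metis max.coboundedI1 max.coboundedI2)
  define D where "D c t = exp(c*t) * c * ((x t - y t) \<bullet> (x t - y t)) + exp(c*t) * (2 * ((x t - y t) \<bullet> (F t (x t) - F t (y t))))" for c t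
  define w where "w c t = exp(c*t) * ((x t - y t) \<bullet> (x t - y t))" for c t
  have dw: "(w c has_derivative (*) (D c t)) (at t within {a..b})" if "a \<le> t" "t \<le> b" for c t
    unfolding w_def D_def using that by (intro wdiff dx dy) auto
  have w0: "w c t = 0 \<Longrightarrow> x t = y t" for c t
    unfolding w_def by simp
  have wnn: "w c t \<ge> 0" for c t unfolding w_def by simp
  show "x b = y b" if "x a = y a"
  proof -
    obtain z where z: "z \<in> {a<..<b}" "w (-2*L) b - w (-2*L) a = D (-2*L) z * (b - a)"
      using mvt_simple[OF ab dw] by blast
    have "D (-2*L) z = exp((-2*L)*z) * 2 * ((x z - y z) \<bullet> (F z (x z) - F z (y z)) - L * ((x z - y z) \<bullet> (x z - y z)))"
      unfolding D_def by (simp add: algebra_simps)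
    also have "\<dots> \<le> 0" using key[of z] z by (intro mult_nonneg_nonpos) auto
    finally have "D (-2*L) z \<le> 0" .
    moreover have "w (-2*L) a = 0" unfolding w_def using that by simp
    ultimately have "w (-2*L) b \<le> 0" using z ab by (smt (verit) mult_nonpos_nonneg)
    then show ?thesis using wnn[of "-2*L" b] w0 by (meson order_antisym)
  qed
  show "x a = y a" if "x b = y b"
  proof -
    obtain z where z: "z \<in> {a<..<b}" "w (2*L) b - w (2*L) a = D (2*L) z * (b - a)"
      using mvt_simple[OF ab dw] by blast
    have "D (2*L) z = exp((2*L)*z) * 2 * ((x z - y z) \<bullet> (F z (x z) - F z (y z)) + L * ((x z - y z) \<bullet> (x z - y z)))"
      unfolding D_def by (simp add: algebra_simps)
    also have "\<dots> \<ge> 0" using key[of z] z by (intro mult_nonneg_nonneg) auto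
    finally have "D (2*L) z \<ge> 0" .
    moreover have "w (2*L) b = 0" unfolding w_def using that by simp
    ultimately have "w (2*L) a \<le> 0" using z ab by (smt (verit) mult_nonneg_nonneg)
    then show ?thesis using wnn[of "2*L" a] w0 by (meson order_antisym)
  qed
qed

lemma uniq_interval:
  fixes F :: "real \<Rightarrow> 'a::euclidean_space \<Rightarrow> 'a" and x y :: "real \<Rightarrow> 'a"
  assumes lip: "\<And>R. \<exists>L. \<forall>t p q. norm p \<le> R \<longrightarrow> norm q \<le> R \<longrightarrow> norm (F t p - F t q) \<le> L * norm (p - q)"
    and I: "is_interval I" "t0 \<in> I"
    and dx: "\<And>t. t \<in> I \<Longrightarrow> (x has_vector_derivative F t (x t)) (at t within I)"
    and dy: "\<And>t. t \<in> I \<Longrightarrow> (y has_vector_derivative F t (y t)) (at t within I)"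
    and init: "x t0 = y t0" and t: "t \<in> I"
  shows "x t = y t"
proof -
  have sub: "{a..b} \<subseteq> I" if "a \<in> I" "b \<in> I" for a b
    using I(1) that unfolding is_interval_1 by (meson atLeastAtMost_iff subsetI)
  consider "t0 < t" | "t = t0" | "t < t0" by linarith
  then show ?thesis
  proof cases
    case 1
    have S: "{t0..t} \<subseteq> I" by (rule sub[OF I(2) t])
    show ?thesis
    proof (rule uniq_dir(1)[OF lip 1, of x y, OF _ _ init])
      fix s assume "s \<in> {t0..t}"
      then have "s \<in> I" using S by blast
      show "(x has_vector_derivative F s (x s)) (at s within {t0..t})"
        by (rule has_vector_derivative_within_subset[OF dx[OF \<open>s \<in> I\<close>] S])
      show "(y has_vector_derivative F s (y s)) (at s within {t0..t})"
        by (rule has_vector_derivative_within_subset[OF dy[OF \<open>s \<in> I\<close>] S])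
    qed
  next
    case 3
    have S: "{t..t0} \<subseteq> I" by (rule sub[OF t I(2)])
    show ?thesis
    proof (rule uniq_dir(2)[OF lip 3, of x y, OF _ _ init])
      fix s assume "s \<in> {t..t0}"
      then have "s \<in> I" using S by blast
      show "(x has_vector_derivative F s (x s)) (at s within {t..t0})"
        by (rule has_vector_derivative_within_subset[OF dx[OF \<open>s \<in> I\<close>] S])
      show "(y has_vector_derivative F s (y s)) (at s within {t..t0})"
        by (rule has_vector_derivative_within_subset[OF dy[OF \<open>s \<in> I\<close>] S])
    qed
  qed (use init in simp)
qed

lemma int_diff:
  fixes g :: "real \<Rightarrow> 'a::euclidean_space"
  assumes g: "continuous_on {a..b} g" and k: "continuous_on {a..b} k"
    and c: "c \<in> {a..b}" and d: "d \<in> {a..b}"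
    and le: "\<And>s. s \<in> {min c d..max c d} \<Longrightarrow> norm (g s) \<le> k s"
  shows "norm (integral {a..c} g - integral {a..d} g) \<le> integral {min c d..max c d} k"
proof -
  have main: "norm (integral {a..c} g - integral {a..d} g) \<le> integral {d..c} k"
    if dc: "d \<le> c" "c \<in> {a..b}" "d \<in> {a..b}" "\<And>s. s \<in> {d..c} \<Longrightarrow> norm (g s) \<le> k s" for c d
  proof -
    have sub1: "{a..c} \<subseteq> {a..b}" "{d..c} \<subseteq> {a..b}" using dc by auto
    have "integral {a..d} g + integral {d..c} g = integral {a..c} g"
      using dc by (intro Henstock_Kurzweil_Integration.integral_combine integrable_continuous_interval
          continuous_on_subset[OF g sub1(1)]) auto
    then have "integral {a..c} g - integral {a..d} g = integral {d..c} g" by (simp add: algebra_simps)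
    also have "norm \<dots> \<le> integral {d..c} k"
      using dc by (intro Henstock_Kurzweil_Integration.integral_norm_bound_integral
          integrable_continuous_interval continuous_on_subset[OF g sub1(2)]
          continuous_on_subset[OF k sub1(2)]) auto
    finally show ?thesis .
  qed
  show ?thesis
  proof (cases "d \<le> c")
    case True
    then show ?thesis using main[OF True c d] le by (simp add: max_def min_def)
  next
    case False
    then have "norm (integral {a..d} g - integral {a..c} g) \<le> integral {c..d} k"
      using main[of c d] c d le by (simp add: max_def min_def)
    then show ?thesis using False by (simp add: norm_minus_commute max_def min_def)
  qed
qed

lemma pow_aux: "(z::real) ^ n + real n * z ^ (n - Suc 0) * z = (1 + real n) * z^n"
  by (cases n) (auto simp: algebra_simps)

lemma pow_aux2: "- ((- ((z::real) ^ n) - real n * z ^ (n - Suc 0) * z) / (1 + real n)) = z ^ n"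
proof -
  have "- (z ^ n) - real n * z ^ (n - Suc 0) * z = - ((1 + real n) * z^n)" using pow_aux[of z n] by linarith
  moreover have "(1 + real n) \<noteq> 0" by simp
  ultimately show ?thesis by simp
qed

lemma int_pow_abs:
  fixes c t0 :: real
  shows "((\<lambda>s. \<bar>s - t0\<bar> ^ n) has_integral (\<bar>c - t0\<bar> ^ Suc n / Suc n)) {min c t0..max c t0}"
proof (cases "t0 \<le> c")
  case True
  have "((\<lambda>s. (s - t0) ^ n) has_integral ((c - t0) ^ Suc n / Suc n - (t0 - t0) ^ Suc n / Suc n)) {t0..c}"
    using True
    by (intro fundamental_theorem_of_calculus)
      (auto intro!: derivative_eq_intros simp: has_real_derivative_iff_has_vector_derivative[symmetric] pow_aux pow_aux2)
  then have "((\<lambda>s. \<bar>s - t0\<bar> ^ n) has_integral ((c - t0) ^ Suc n / Suc n)) {t0..c}"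
    by (subst has_integral_cong[where g="\<lambda>s. (s - t0) ^ n"]) auto
  moreover have "min c t0 = t0" "max c t0 = c" "\<bar>c - t0\<bar> = c - t0" using True by auto
  ultimately show ?thesis by simp
next
  case False
  have "((\<lambda>s. (t0 - s) ^ n) has_integral ((- ((t0 - t0) ^ Suc n / Suc n)) - (- ((t0 - c) ^ Suc n / Suc n)))) {c..t0}"
    using False
    by (intro fundamental_theorem_of_calculus)
      (auto intro!: derivative_eq_intros simp: has_real_derivative_iff_has_vector_derivative[symmetric] pow_aux pow_aux2)
  then have "((\<lambda>s. \<bar>s - t0\<bar> ^ n) has_integral ((t0 - c) ^ Suc n / Suc n)) {c..t0}"
    by (subst has_integral_cong[where g="\<lambda>s. (t0 - s) ^ n"]) auto
  moreover have "min c t0 = c" "max c t0 = t0" "\<bar>c - t0\<bar> = t0 - c" using False by auto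
  ultimately show ?thesis by simp
qed

lemma exist_interval:
  fixes F :: "real \<Rightarrow> 'a::euclidean_space \<Rightarrow> 'a"
  assumes cont: "\<And>x. continuous_on UNIV x \<Longrightarrow> continuous_on UNIV (\<lambda>t. F t (x t))"
    and bnd: "\<And>t p. norm (F t p) \<le> B"
    and lip: "\<And>R. \<exists>L. \<forall>t p q. norm p \<le> R \<longrightarrow> norm q \<le> R \<longrightarrow> norm (F t p - F t q) \<le> L * norm (p - q)"
    and at0: "a \<le> t0" "t0 \<le> b"
  shows "\<exists>x. x t0 = p0 \<and> (\<forall>t\<in>{a..b}. (x has_vector_derivative F t (x t)) (at t within {a..b}))"
proof -
  have B0: "0 \<le> B" using bnd[of 0 0] norm_ge_zero order_trans by blast
  have ab: "a \<le> b" using at0 by simp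
  define R0 where "R0 = B * (b - a)"
  have R00: "0 \<le> R0" unfolding R0_def using B0 ab by simp
  define clamp where "clamp t = max a (min b t)" for t
  have clamp_in: "clamp t \<in> {a..b}" for t unfolding clamp_def using ab by auto
  have clamp_id: "t \<in> {a..b} \<Longrightarrow> clamp t = t" for t unfolding clamp_def by auto
  have clamp_cont: "continuous_on UNIV clamp" unfolding clamp_def by (intro continuous_intros)
  define G where "G x s = F s (apply_bcontfun x s)" for x :: "real \<Rightarrow>\<^sub>C 'a" and s
  have Gc: "continuous_on UNIV (G x)" for x unfolding G_def by (rule cont) simp
  have Gab: "continuous_on {a..b} (G x)" for x using Gc continuous_on_subset by blast
  have Gint: "G x integrable_on {a..y}" if "y \<in> {a..b}" for x y
    using that by (intro integrable_continuous_interval continuous_on_subset[OF Gab]) auto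
  define Pf where "Pf x t = p0 + (integral {a..clamp t} (G x) - integral {a..t0} (G x))" for x t
  have Pf_bound: "norm (Pf x t - p0) \<le> R0" for x t
  proof -
    have "norm (integral {a..clamp t} (G x) - integral {a..t0} (G x))
        \<le> integral {min (clamp t) t0..max (clamp t) t0} (\<lambda>_. B)"
      by (rule int_diff[OF Gab continuous_on_const clamp_in]) (use at0 bnd G_def in auto)
    also have "\<dots> = (max (clamp t) t0 - min (clamp t) t0) * B" by simp
    also have "\<dots> \<le> (b - a) * B" using clamp_in[of t] at0 B0 by (intro mult_right_mono) auto
    finally show ?thesis by (simp add: Pf_def R0_def mult.commute)
  qed
  have Pf_cont: "continuous_on UNIV (Pf x)" for x
  proof -
    have "continuous_on {a..b} (\<lambda>c. integral {a..c} (G x))"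
      by (intro indefinite_integral_continuous_1 integrable_continuous_interval Gab)
    then have "continuous_on UNIV (\<lambda>t. integral {a..clamp t} (G x))"
      by (rule continuous_on_compose2[OF _ clamp_cont]) (auto intro: clamp_in)
    then show ?thesis unfolding Pf_def by (intro continuous_intros)
  qed
  have Pf_bc: "Pf x \<in> bcontfun" for x
  proof -
    have "norm (Pf x t) \<le> norm p0 + R0" for t
      using Pf_bound[of x t] norm_triangle_sub[of "Pf x t" p0] by simp
    then have "bounded (range (Pf x))" unfolding bounded_iff by blast
    then show ?thesis unfolding bcontfun_def using Pf_cont by simp
  qed
  define P where "P x = Bcontfun (Pf x)" for x
  have P_apply: "apply_bcontfun (P x) t = Pf x t" for x t
    unfolding P_def using Pf_bc by (simp add: Bcontfun_inverse)
  define S where "S = {x::real \<Rightarrow>\<^sub>C 'a. \<forall>t. norm (apply_bcontfun x t - p0) \<le> R0}"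
  have PS: "P x \<in> S" for x using Pf_bound by (simp add: S_def P_apply)
  have Sne: "const_bcontfun p0 \<in> S" unfolding S_def using R00 by (simp add: const_bcontfun.rep_eq)
  have evc: "continuous_on UNIV (\<lambda>x::real \<Rightarrow>\<^sub>C 'a. apply_bcontfun x t)" for t
    by (rule lipschitz_on_continuous_on[of 1]) (auto intro!: lipschitz_onI dist_bounded)
  have Sclosed: "closed S" unfolding S_def
    by (intro closed_Collect_all closed_Collect_le continuous_on_const
        continuous_on_norm[OF continuous_on_diff[OF evc continuous_on_const]])
  obtain L0 where L0: "\<forall>t p q. norm p \<le> norm p0 + R0 \<longrightarrow> norm q \<le> norm p0 + R0 \<longrightarrow> norm (F t p - F t q) \<le> L0 * norm (p - q)"
    using lip by blast
  define L where "L = max L0 0"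
  have L: "L \<ge> 0" "\<And>t p q. norm p \<le> norm p0 + R0 \<Longrightarrow> norm q \<le> norm p0 + R0 \<Longrightarrow> norm (F t p - F t q) \<le> L * norm (p - q)"
  proof -
    show "L \<ge> 0" unfolding L_def by simp
    fix t and p q :: 'a assume "norm p \<le> norm p0 + R0" "norm q \<le> norm p0 + R0"
    then have "norm (F t p - F t q) \<le> L0 * norm (p - q)" using L0 by blast
    also have "\<dots> \<le> L * norm (p - q)" unfolding L_def by (intro mult_right_mono) auto
    finally show "norm (F t p - F t q) \<le> L * norm (p - q)" .
  qed
  have inS: "norm (apply_bcontfun x t) \<le> norm p0 + R0" if "x \<in> S" for x t
  proof -
    have "norm (apply_bcontfun x t - p0) \<le> R0" using that unfolding S_def by blast
    then show ?thesis using norm_triangle_sub[of "apply_bcontfun x t" p0] by linarith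
  qed
  have iterS: "(P^^n) x \<in> S" if "x \<in> S" for n x
    using that PS by (cases n) auto
  have est: "\<forall>t. norm (apply_bcontfun ((P^^n) u) t - apply_bcontfun ((P^^n) v) t)
      \<le> (L * \<bar>clamp t - t0\<bar>)^n / fact n * dist u v" if uv: "u \<in> S" "v \<in> S" for n u v
  proof (induction n)
    case 0
    show ?case using dist_bounded[of u _ v] by (simp add: dist_norm)
  next
    case (Suc n)
    show ?case
    proof
      fix t
      define U where "U = (P^^n) u"
      define V where "V = (P^^n) v"
      have US: "U \<in> S" "V \<in> S" unfolding U_def V_def using iterS uv by auto
      define c where "c = clamp t"
      have cab: "c \<in> {a..b}" unfolding c_def by (rule clamp_in)
      have t0ab: "t0 \<in> {a..b}" using at0 by simp
      have "apply_bcontfun ((P^^Suc n) u) t - apply_bcontfun ((P^^Suc n) v) t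
          = integral {a..c} (\<lambda>s. G U s - G V s) - integral {a..t0} (\<lambda>s. G U s - G V s)"
        using Gint[OF cab] Gint[OF t0ab]
        by (simp add: P_apply Pf_def c_def U_def V_def Henstock_Kurzweil_Integration.integral_diff algebra_simps)
      also have "norm \<dots> \<le> integral {min c t0..max c t0} (\<lambda>s. (L^(Suc n) * dist u v / fact n) * \<bar>s - t0\<bar>^n)"
      proof (rule int_diff[OF continuous_on_diff[OF Gab Gab] _ cab t0ab])
        show "continuous_on {a..b} (\<lambda>s. L ^ Suc n * dist u v / fact n * \<bar>s - t0\<bar> ^ n)"
          by (intro continuous_intros)
        fix s assume s: "s \<in> {min c t0..max c t0}"
        then have sab: "s \<in> {a..b}" using cab t0ab by auto
        have "norm (G U s - G V s) \<le> L * norm (apply_bcontfun U s - apply_bcontfun V s)"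
          unfolding G_def by (intro L(2) inS US)
        also have "\<dots> \<le> L * ((L * \<bar>s - t0\<bar>)^n / fact n * dist u v)"
          using Suc.IH[rule_format, of s] clamp_id[OF sab] L(1) unfolding U_def V_def
          by (intro mult_left_mono) auto
        also have "\<dots> = (L^(Suc n) * dist u v / fact n) * \<bar>s - t0\<bar>^n"
          by (simp add: power_mult_distrib)
        finally show "norm (G U s - G V s) \<le> (L^(Suc n) * dist u v / fact n) * \<bar>s - t0\<bar>^n" .
      qed
      also have "\<dots> = (L^(Suc n) * dist u v / fact n) * (\<bar>c - t0\<bar>^Suc n / Suc n)"
        by (rule integral_unique[OF has_integral_mult_right[OF int_pow_abs]])
      also have "\<dots> = (L * \<bar>c - t0\<bar>)^Suc n / fact (Suc n) * dist u v"
        by (simp add: power_mult_distrib field_simps)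
      finally show "norm (apply_bcontfun ((P^^Suc n) u) t - apply_bcontfun ((P^^Suc n) v) t)
          \<le> (L * \<bar>clamp t - t0\<bar>)^Suc n / fact (Suc n) * dist u v"
        unfolding c_def .
    qed
  qed
  have "(\<lambda>n. (L * (b - a))^n / fact n) \<longlonglongrightarrow> 0"
    using summable_LIMSEQ_zero [OF summable_exp] by (auto simp add: inverse_eq_divide)
  then have "eventually (\<lambda>n. (L * (b - a))^n / fact n < 1) sequentially"
    by (rule order_tendstoD(2)) simp
  then obtain N where N: "(L * (b - a))^N / fact N < 1"
    unfolding eventually_sequentially by blast
  define c where "c = (L * (b - a))^N / fact N"
  have c0: "0 \<le> c" unfolding c_def using L(1) ab by simp
  have contr: "dist ((P^^N) u) ((P^^N) v) \<le> c * dist u v" if "u \<in> S" "v \<in> S" for u v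
  proof (rule dist_bound)
    fix t
    have "dist (apply_bcontfun ((P^^N) u) t) (apply_bcontfun ((P^^N) v) t)
        \<le> (L * \<bar>clamp t - t0\<bar>)^N / fact N * dist u v"
      using est[OF that, of N] by (simp add: dist_norm)
    also have "\<dots> \<le> c * dist u v"
      unfolding c_def using clamp_in[of t] at0 L(1)
      by (intro mult_right_mono divide_right_mono power_mono mult_left_mono) auto
    finally show "dist (apply_bcontfun ((P^^N) u) t) (apply_bcontfun ((P^^N) v) t) \<le> c * dist u v" .
  qed
  have "\<exists>!z\<in>S. (P^^N) z = z"
    by (rule Banach_fix[OF _ _ c0])
      (use Sclosed complete_eq_closed Sne N contr iterS c_def in auto)
  then obtain z where z: "z \<in> S" "(P^^N) z = z" and uq: "\<And>y. y \<in> S \<Longrightarrow> (P^^N) y = y \<Longrightarrow> y = z"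
    by blast
  have "(P^^N) (P z) = P z" by (metis funpow_swap1 z(2))
  then have Pz: "P z = z" using uq PS by blast
  define x where "x = apply_bcontfun z"
  have xeq: "x t = p0 + (integral {a..t} (G z) - integral {a..t0} (G z))" if "t \<in> {a..b}" for t
    using P_apply[of z t] Pz clamp_id[OF that] unfolding x_def Pf_def by simp
  show ?thesis
  proof (intro exI conjI ballI)
    show "x t0 = p0" using xeq[of t0] at0 by simp
    fix t assume t: "t \<in> {a..b}"
    have "((\<lambda>s. p0 + (integral {a..s} (G z) - integral {a..t0} (G z))) has_vector_derivative G z t) (at t within {a..b})"
      using integral_has_vector_derivative[OF Gab t]
      by (auto intro!: derivative_eq_intros)
    then have "((\<lambda>s. p0 + (integral {a..s} (G z) - integral {a..t0} (G z))) has_vector_derivative F t (x t)) (at t within {a..b})"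
      unfolding G_def x_def .
    then show "(x has_vector_derivative F t (x t)) (at t within {a..b})"
      by (rule has_vector_derivative_transform_within[where d=1]) (use t in \<open>auto simp: xeq\<close>)
  qed
qed

lemma global_ode:
  fixes F :: "real \<Rightarrow> 'a::euclidean_space \<Rightarrow> 'a"
  assumes cont: "\<And>x. continuous_on UNIV x \<Longrightarrow> continuous_on UNIV (\<lambda>t. F t (x t))"
    and bnd: "\<And>t p. norm (F t p) \<le> B"
    and lip: "\<And>R. \<exists>L. \<forall>t p q. norm p \<le> R \<longrightarrow> norm q \<le> R \<longrightarrow> norm (F t p - F t q) \<le> L * norm (p - q)"
  shows "\<exists>x. x t0 = p0 \<and>
           (\<forall>t. (x has_vector_derivative F t (x t)) (at t)) \<and>
           (\<forall>I y. is_interval I \<and> t0 \<in> I \<and> y t0 = p0 \<and>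
                  (\<forall>t\<in>I. (y has_vector_derivative F t (y t)) (at t within I))
                  \<longrightarrow> (\<forall>t\<in>I. y t = x t))"
proof -
  define X where "X r = (SOME x. x t0 = p0 \<and> (\<forall>t\<in>{t0-r..t0+r}. (x has_vector_derivative F t (x t)) (at t within {t0-r..t0+r})))" for r
  have X: "X r t0 = p0 \<and> (\<forall>t\<in>{t0-r..t0+r}. (X r has_vector_derivative F t (X r t)) (at t within {t0-r..t0+r}))"
    if "r \<ge> 0" for r
  proof -
    have "\<exists>x. x t0 = p0 \<and> (\<forall>t\<in>{t0-r..t0+r}. (x has_vector_derivative F t (x t)) (at t within {t0-r..t0+r}))"
      by (rule exist_interval[OF cont bnd lip]) (use that in auto)
    then show ?thesis unfolding X_def by (rule someI_ex)
  qed
  have agree: "X r s = X r' s" if "0 \<le> r" "r \<le> r'" "\<bar>s - t0\<bar> \<le> r" for r r' s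
  proof (rule uniq_interval[OF lip, of "{t0-r..t0+r}" t0])
    show "is_interval {t0-r..t0+r}" by (rule is_interval_cc)
    show "t0 \<in> {t0-r..t0+r}" "s \<in> {t0-r..t0+r}" using that by auto
    show "X r t0 = X r' t0" using X that by auto
    fix t assume t: "t \<in> {t0-r..t0+r}"
    show "(X r has_vector_derivative F t (X r t)) (at t within {t0 - r..t0 + r})"
      using X[OF that(1)] t by blast
    have sub: "{t0-r..t0+r} \<subseteq> {t0-r'..t0+r'}" using that by auto
    show "(X r' has_vector_derivative F t (X r' t)) (at t within {t0 - r..t0 + r})"
      using X[of r'] that t sub by (intro has_vector_derivative_within_subset[OF _ sub]) auto
  qed
  define x where "x t = X (\<bar>t - t0\<bar> + 2) t" for t
  have dx: "(x has_vector_derivative F t (x t)) (at t)" for t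
  proof -
    define r where "r = \<bar>t - t0\<bar> + 2"
    have r0: "r \<ge> 0" unfolding r_def by simp
    have tin: "t0 - r < t" "t < t0 + r" unfolding r_def by auto
    have "(X r has_vector_derivative F t (X r t)) (at t within {t0-r..t0+r})"
      using X[OF r0] tin by auto
    then have d: "(X r has_vector_derivative F t (X r t)) (at t)"
      using at_within_Icc_at[OF tin] by simp
    have xt: "x t = X r t" unfolding x_def r_def ..
    show ?thesis unfolding xt
    proof (rule has_vector_derivative_transform_within_open[OF d open_ball])
      show "t \<in> ball t 1" by simp
      fix s assume s: "s \<in> ball t 1"
      then have s1: "\<bar>s - t0\<bar> \<le> r" unfolding r_def by (auto simp: dist_real_def)
      show "X r s = x s"
      proof (cases "\<bar>s - t0\<bar> + 2 \<le> r")
        case True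
        then show ?thesis unfolding x_def by (intro agree[symmetric]) auto
      next
        case False
        then show ?thesis unfolding x_def using s1 r0 by (intro agree) auto
      qed
    qed
  qed
  show ?thesis
  proof (intro exI conjI allI impI ballI)
    show "x t0 = p0" unfolding x_def using X[of 2] by simp
    show "(x has_vector_derivative F t (x t)) (at t)" for t by (rule dx)
    fix I y t
    assume H: "is_interval I \<and> t0 \<in> I \<and> y t0 = p0 \<and> (\<forall>t\<in>I. (y has_vector_derivative F t (y t)) (at t within I))"
      and t: "t \<in> I"
    show "y t = x t"
    proof (rule uniq_interval[OF lip, of I t0])
      show "is_interval I" "t0 \<in> I" "t \<in> I" using H t by auto
      show "y t0 = x t0" using H X[of 2] unfolding x_def by simp
      show "(y has_vector_derivative F s (y s)) (at s within I)" if "s \<in> I" for s using H that by blast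
      show "(x has_vector_derivative F s (x s)) (at s within I)" if "s \<in> I" for s
        using dx[of s] by (rule has_vector_derivative_at_within)
    qed
  qed
qed



lemma h_bound:
  assumes "admissible_h h h' h''"
  shows "\<exists>M. \<forall>y. \<bar>h y\<bar> \<le> M"
proof -
  from assms obtain M where M: "\<forall>y>0. \<bar>h y\<bar> \<le> M" and h0: "\<forall>y\<le>0. h y = 0"
    unfolding admissible_h_def by blast
  have "\<bar>h y\<bar> \<le> max M 0" for y using M h0 by (cases "y > 0") force+
  then show ?thesis by blast
qed

lemma h_lip:
  assumes "admissible_h h h' h''"
  shows "\<exists>L. \<forall>y z. \<bar>y\<bar> \<le> K \<longrightarrow> \<bar>z\<bar> \<le> K \<longrightarrow> \<bar>h y - h z\<bar> \<le> L * \<bar>y - z\<bar>"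
proof -
  from assms have h0: "\<forall>y\<le>0. h y = 0"
    and der: "\<forall>y>0. (h has_real_derivative h' y) (at y) \<and> (h' has_real_derivative h'' y) (at y)"
    and e1: "\<exists>C. eventually (\<lambda>y. \<bar>h y / y\<bar> \<le> C) (at_right 0)"
    and e2: "\<exists>C. eventually (\<lambda>y. \<bar>h' y\<bar> \<le> C) (at_right 0)"
    unfolding admissible_h_def by blast+
  obtain C1 where "eventually (\<lambda>y. \<bar>h y / y\<bar> \<le> C1) (at_right 0)" using e1 by blast
  then obtain d1 where d1: "d1 > 0" and C1: "\<And>y. 0 < y \<Longrightarrow> y < d1 \<Longrightarrow> \<bar>h y / y\<bar> \<le> C1"
    unfolding eventually_at_right_field by blast
  obtain C2 where "eventually (\<lambda>y. \<bar>h' y\<bar> \<le> C2) (at_right 0)" using e2 by blast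
  then obtain d2 where d2: "d2 > 0" and C2: "\<And>y. 0 < y \<Longrightarrow> y < d2 \<Longrightarrow> \<bar>h' y\<bar> \<le> C2"
    unfolding eventually_at_right_field by blast
  have "isCont h' y" if "y \<in> {d2/2..K}" for y
  proof -
    have "y > 0" using that d2 by simp
    then have "(h' has_real_derivative h'' y) (at y)" using der by blast
    then show ?thesis by (rule DERIV_isCont)
  qed
  then have "continuous_on {d2/2..K} h'" by (intro continuous_at_imp_continuous_on) blast
  then have "bounded (h' ` {d2/2..K})" by (intro compact_imp_bounded compact_continuous_image) auto
  then obtain C3 where C3': "\<forall>y\<in>{d2/2..K}. \<bar>h' y\<bar> \<le> C3"
    unfolding bounded_iff by auto
  then have C3: "\<And>y. y \<in> {d2/2..K} \<Longrightarrow> \<bar>h' y\<bar> \<le> C3" by blast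
  define LD where "LD = max C2 C3"
  have hd: "\<bar>h' y\<bar> \<le> LD" if "0 < y" "y \<le> K" for y
  proof (cases "y < d2")
    case True then have "\<bar>h' y\<bar> \<le> C2" using C2 that by blast
    then show ?thesis unfolding LD_def by (rule max.coboundedI1)
  next
    case False then have "\<bar>h' y\<bar> \<le> C3" using C3[of y] that d2 by simp
    then show ?thesis unfolding LD_def by (rule max.coboundedI2)
  qed
  have pos: "\<bar>h z - h y\<bar> \<le> LD * (z - y)" if "0 < y" "y \<le> z" "z \<le> K" for y z
  proof (cases "y = z")
    case False
    then have "y < z" using that by simp
    have "\<exists>w. y < w \<and> w < z \<and> h z - h y = (z - y) * h' w"
      by (rule MVT2[OF \<open>y < z\<close>]) (use der that in auto)
    then obtain w where w: "y < w" "w < z" "h z - h y = (z - y) * h' w" by blast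
    have "\<bar>h z - h y\<bar> = (z - y) * \<bar>h' w\<bar>" using w by (simp add: abs_mult)
    also have "\<dots> \<le> (z - y) * LD" using hd[of w] w that by (intro mult_left_mono) auto
    finally show ?thesis by (simp add: mult.commute)
  qed simp
  define LL where "LL = max (max LD C1) 0"
  have zero: "\<bar>h z\<bar> \<le> LL * z" if "0 < z" "z \<le> K" for z
  proof (cases "z < d1")
    case True
    have "\<bar>h z\<bar> = \<bar>h z / z\<bar> * z" using that by (simp add: abs_div)
    also have "\<dots> \<le> C1 * z" using C1[of z] True that by (intro mult_right_mono) auto
    also have "\<dots> \<le> LL * z" unfolding LL_def using that by (intro mult_right_mono) auto
    finally show ?thesis .
  next
    case False
    define y0 where "y0 = d1 / 2"
    have y0: "0 < y0" "y0 < d1" "y0 \<le> z" using d1 False unfolding y0_def by auto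
    have A: "\<bar>h z - h y0\<bar> \<le> LD * (z - y0)" using pos[of y0 z] y0 that by auto
    have B: "\<bar>h y0\<bar> \<le> C1 * y0"
    proof -
      have "\<bar>h y0\<bar> = \<bar>h y0 / y0\<bar> * y0" using y0 by (simp add: abs_div)
      also have "\<dots> \<le> C1 * y0" using C1[of y0] y0 by (intro mult_right_mono) auto
      finally show ?thesis .
    qed
    have "\<bar>h z\<bar> \<le> LD * (z - y0) + C1 * y0" using A B by linarith
    also have "LD * (z - y0) + C1 * y0 \<le> LL * (z - y0) + LL * y0"
      unfolding LL_def using y0 by (intro add_mono mult_right_mono) auto
    also have "\<dots> = LL * z" by (simp add: algebra_simps)
    finally show ?thesis .
  qed
  have main: "\<bar>h z - h y\<bar> \<le> LL * (z - y)" if "y \<le> z" "\<bar>y\<bar> \<le> K" "\<bar>z\<bar> \<le> K" for y z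
  proof -
    consider "z \<le> 0" | "y \<le> 0" "0 < z" | "0 < y" by linarith
    then show ?thesis
    proof cases
      case 1 then show ?thesis using h0 that unfolding LL_def by simp
    next
      case 2
      have "\<bar>h z - h y\<bar> = \<bar>h z\<bar>" using h0 2 by simp
      also have "\<dots> \<le> LL * z" using zero[of z] 2 that by simp
      also have "\<dots> \<le> LL * (z - y)" using 2 unfolding LL_def by (intro mult_left_mono) auto
      finally show ?thesis .
    next
      case 3
      have "\<bar>h z - h y\<bar> \<le> LD * (z - y)" using pos[of y z] 3 that by simp
      also have "\<dots> \<le> LL * (z - y)" using that unfolding LL_def by (intro mult_right_mono) auto
      finally show ?thesis .
    qed
  qed
  have "\<bar>h y - h z\<bar> \<le> LL * \<bar>y - z\<bar>" if "\<bar>y\<bar> \<le> K" "\<bar>z\<bar> \<le> K" for y z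
  proof (cases "y \<le> z")
    case True then show ?thesis using main[of y z] that by (simp add: abs_minus_commute)
  next
    case False then show ?thesis using main[of z y] that by simp
  qed
  then show ?thesis by blast
qed

lemma h_cont:
  assumes "admissible_h h h' h''"
  shows "continuous_on UNIV h"
proof (intro continuous_at_imp_continuous_on ballI)
  fix y :: real
  define K where "K = \<bar>y\<bar> + 1"
  obtain L where L: "\<forall>y z. \<bar>y\<bar> \<le> K \<longrightarrow> \<bar>z\<bar> \<le> K \<longrightarrow> \<bar>h y - h z\<bar> \<le> L * \<bar>y - z\<bar>"
    using h_lip[OF assms] by blast
  have "(max L 0)-lipschitz_on {-K..K} h"
  proof (rule lipschitz_onI)
    fix u v assume "u \<in> {-K..K}" "v \<in> {-K..K}"
    then have "\<bar>h u - h v\<bar> \<le> L * \<bar>u - v\<bar>" using L by auto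
    also have "\<dots> \<le> max L 0 * \<bar>u - v\<bar>" by (intro mult_right_mono) auto
    finally show "dist (h u) (h v) \<le> max L 0 * dist u v" by (simp add: dist_real_def)
  qed simp
  then have "continuous_on {-K..K} h" by (rule lipschitz_on_continuous_on)
  then show "isCont h y" by (rule continuous_on_interior) (auto simp: K_def)
qed


lemma sq_diff: "\<bar>(a::real)^2 - b^2\<bar> \<le> \<bar>a - b\<bar> * (\<bar>a\<bar> + \<bar>b\<bar>)"
proof -
  have "\<bar>a^2 - b^2\<bar> = \<bar>a - b\<bar> * \<bar>a + b\<bar>" by (simp add: power2_eq_square algebra_simps abs_mult[symmetric])
  also have "\<dots> \<le> \<bar>a - b\<bar> * (\<bar>a\<bar> + \<bar>b\<bar>)" by (intro mult_left_mono abs_triangle_ineq) auto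
  finally show ?thesis .
qed

lemma normsq_diff:
  fixes u v :: "'a::real_normed_vector"
  shows "\<bar>norm u ^ 2 - norm v ^ 2\<bar> \<le> norm (u - v) * (norm u + norm v)"
proof -
  have "\<bar>norm u ^ 2 - norm v ^ 2\<bar> \<le> \<bar>norm u - norm v\<bar> * (\<bar>norm u\<bar> + \<bar>norm v\<bar>)" by (rule sq_diff)
  also have "\<dots> \<le> norm (u - v) * (norm u + norm v)"
    by (simp add: mult_right_mono norm_triangle_ineq3)
  finally show ?thesis .
qed

lemma nth_diff_bound:
  fixes p :: "'b::real_normed_vector ^ 'v"
  assumes "norm p \<le> R"
  shows "norm (p $ j - p $ i) \<le> 2 * R"
proof -
  have "norm (p $ j - p $ i) \<le> norm (p $ j) + norm (p $ i)" by (rule norm_triangle_ineq4)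
  also have "\<dots> \<le> R + R" using Finite_Cartesian_Product.norm_nth_le[of p j] Finite_Cartesian_Product.norm_nth_le[of p i] assms by linarith
  finally show ?thesis by simp
qed

lemma nth_diff_lip:
  fixes p q :: "'b::real_normed_vector ^ 'v"
  shows "norm ((p $ j - p $ i) - (q $ j - q $ i)) \<le> 2 * norm (p - q)"
proof -
  have eq: "(p $ j - p $ i) - (q $ j - q $ i) = (p - q) $ j - (p - q) $ i" by (simp add: algebra_simps)
  show ?thesis by (subst eq) (rule nth_diff_bound, simp)
qed

lemma psi_cont: "continuous_on UNIV (psi E d i)"
  unfolding psi_def[abs_def] by (intro continuous_intros)

lemma psi_lip:
  fixes E :: "'v::finite set set" and d :: "'v set \<Rightarrow> real"
  shows "\<exists>L. \<forall>p q :: (real^'n)^'v. norm p \<le> R \<longrightarrow> norm q \<le> R \<longrightarrow>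
            \<bar>psi E d i p - psi E d i q\<bar> \<le> L * norm (p - q)"
proof -
  define J where "J = {j. {i, j} \<in> E}"
  define g where "g j p = norm (p $ j - p $ i) ^ 2 - (d {i, j}) ^ 2" for j and p :: "(real^'n)^'v"
  define L where "L = (\<Sum>j\<in>J. 4 * R * (4 * R^2 + (d {i,j})^2))"
  have gb: "\<bar>g j p\<bar> \<le> 4 * R^2 + (d {i,j})^2" if "norm p \<le> R" for j p
  proof -
    have "norm (p $ j - p $ i) ^ 2 \<le> (2 * R) ^ 2"
      using nth_diff_bound[OF that, of j i] by (intro power_mono) auto
    then have a: "norm (p $ j - p $ i) ^ 2 \<le> 4 * R^2" by (simp add: power_mult_distrib)
    have n: "0 \<le> norm (p $ j - p $ i) ^ 2" "0 \<le> (d {i,j})^2" by auto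
    show ?thesis unfolding g_def abs_le_iff using a n by linarith
  qed
  have gl: "\<bar>g j p - g j q\<bar> \<le> 8 * R * norm (p - q)" if "norm p \<le> R" "norm q \<le> R" for j p q
  proof -
    have "\<bar>g j p - g j q\<bar> = \<bar>norm (p $ j - p $ i) ^ 2 - norm (q $ j - q $ i) ^ 2\<bar>" unfolding g_def by simp
    also have "\<dots> \<le> norm ((p $ j - p $ i) - (q $ j - q $ i)) * (norm (p $ j - p $ i) + norm (q $ j - q $ i))"
      by (rule normsq_diff)
    also have "\<dots> \<le> (2 * norm (p - q)) * (2 * R + 2 * R)"
      using nth_diff_bound[OF that(1), of j i] nth_diff_bound[OF that(2), of j i]
      by (intro mult_mono nth_diff_lip add_mono) auto
    finally show ?thesis by (simp add: algebra_simps)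
  qed
  have gsq: "\<bar>g j p ^ 2 - g j q ^ 2\<bar> \<le> 16 * R * (4 * R^2 + (d {i,j})^2) * norm (p - q)"
    if "norm p \<le> R" "norm q \<le> R" for j p q
  proof -
    have R0: "0 \<le> R" using that(1) norm_ge_zero order_trans by blast
    have "\<bar>g j p ^ 2 - g j q ^ 2\<bar> \<le> \<bar>g j p - g j q\<bar> * (\<bar>g j p\<bar> + \<bar>g j q\<bar>)" by (rule sq_diff)
    also have "\<dots> \<le> (8 * R * norm (p - q)) * (2 * (4 * R^2 + (d {i,j})^2))"
      using gl[OF that, of j] gb[OF that(1), of j] gb[OF that(2), of j] R0
      by (intro mult_mono) auto
    finally show ?thesis by (simp add: algebra_simps)
  qed
  have "\<bar>psi E d i p - psi E d i q\<bar> \<le> L * norm (p - q)" if "norm p \<le> R" "norm q \<le> R" for p q :: "(real^'n)^'v"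
  proof -
    have "psi E d i p - psi E d i q = (1/4) * (\<Sum>j\<in>J. g j p ^ 2 - g j q ^ 2)"
      unfolding psi_def J_def g_def by (simp add: sum_subtractf algebra_simps)
    then have "\<bar>psi E d i p - psi E d i q\<bar> = \<bar>(1/4) * (\<Sum>j\<in>J. g j p ^ 2 - g j q ^ 2)\<bar>" by (simp only:)
    also have "\<dots> = (1/4) * \<bar>\<Sum>j\<in>J. g j p ^ 2 - g j q ^ 2\<bar>" by (simp add: abs_mult)
    also have "\<dots> \<le> (1/4) * (\<Sum>j\<in>J. \<bar>g j p ^ 2 - g j q ^ 2\<bar>)" by (intro mult_left_mono sum_abs) auto
    also have "\<dots> \<le> (1/4) * (\<Sum>j\<in>J. 16 * R * (4 * R^2 + (d {i,j})^2) * norm (p - q))"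
      by (intro mult_left_mono sum_mono gsq that) auto
    also have "\<dots> = L * norm (p - q)" unfolding L_def sum_distrib_left sum_distrib_right by (intro sum.cong) (simp_all add: algebra_simps)
    finally show ?thesis .
  qed
  then show ?thesis by blast
qed


lemma normvec_sum:
  fixes x :: "'b::real_normed_vector ^ 'v::finite"
  shows "norm x \<le> (\<Sum>i\<in>UNIV. norm (x $ i))"
  unfolding norm_vec_def by (rule L2_set_le_sum) simp

lemma norm_sum_scaleR_le:
  fixes c :: "'k \<Rightarrow> real" and v :: "'k \<Rightarrow> 'b::real_normed_vector"
  shows "norm (\<Sum>k\<in>A. c k *\<^sub>R v k) \<le> (\<Sum>k\<in>A. \<bar>c k\<bar> * norm (v k))"
  by (rule order_trans[OF norm_sum]) simp

lemma ctrl_bound: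
  assumes "\<forall>y. \<bar>h1 y\<bar> \<le> M1" "\<forall>y. \<bar>h2 y\<bar> \<le> M2"
  shows "\<bar>ctrl E d \<omega> \<phi> h1 h2 i k t p\<bar> \<le> \<bar>sqrt (\<omega> i k)\<bar> * (M1 + M2)"
proof -
  let ?s = "sqrt (\<omega> i k)" and ?a = "\<omega> i k * t + \<phi> i k" and ?y = "psi E d i p"
  have "\<bar>ctrl E d \<omega> \<phi> h1 h2 i k t p\<bar> \<le> \<bar>?s\<bar> * \<bar>cos ?a\<bar> * \<bar>h1 ?y\<bar> + \<bar>?s\<bar> * \<bar>sin ?a\<bar> * \<bar>h2 ?y\<bar>"
    unfolding ctrl_def by (rule order_trans[OF abs_triangle_ineq]) (simp add: abs_mult)
  also have "\<dots> \<le> \<bar>?s\<bar> * 1 * M1 + \<bar>?s\<bar> * 1 * M2"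
    using assms by (intro add_mono mult_mono) auto
  finally show ?thesis by (simp add: algebra_simps)
qed

lemma ctrl_lip:
  "\<bar>ctrl E d \<omega> \<phi> h1 h2 i k t p - ctrl E d \<omega> \<phi> h1 h2 i k t q\<bar>
    \<le> \<bar>sqrt (\<omega> i k)\<bar> * (\<bar>h1 (psi E d i p) - h1 (psi E d i q)\<bar> + \<bar>h2 (psi E d i p) - h2 (psi E d i q)\<bar>)"
proof -
  let ?s = "sqrt (\<omega> i k)" and ?a = "\<omega> i k * t + \<phi> i k"
  let ?u = "h1 (psi E d i p) - h1 (psi E d i q)" and ?v = "h2 (psi E d i p) - h2 (psi E d i q)"
  have "ctrl E d \<omega> \<phi> h1 h2 i k t p - ctrl E d \<omega> \<phi> h1 h2 i k t q = ?s * cos ?a * ?u + ?s * sin ?a * ?v"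
    unfolding ctrl_def by (simp add: algebra_simps)
  then have "\<bar>ctrl E d \<omega> \<phi> h1 h2 i k t p - ctrl E d \<omega> \<phi> h1 h2 i k t q\<bar> \<le> \<bar>?s\<bar> * \<bar>cos ?a\<bar> * \<bar>?u\<bar> + \<bar>?s\<bar> * \<bar>sin ?a\<bar> * \<bar>?v\<bar>"
    by (rule ssubst, intro order_trans[OF abs_triangle_ineq]) (simp add: abs_mult)
  also have "\<dots> \<le> \<bar>?s\<bar> * 1 * \<bar>?u\<bar> + \<bar>?s\<bar> * 1 * \<bar>?v\<bar>"
    by (intro add_mono mult_mono) auto
  finally show ?thesis by (simp add: algebra_simps)
qed

lemma cl_bound:
  assumes "\<forall>y. \<bar>h1 y\<bar> \<le> M1" "\<forall>y. \<bar>h2 y\<bar> \<le> M2"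
  shows "norm (closed_loop E d b \<omega> \<phi> h1 h2 t p)
     \<le> (\<Sum>i\<in>UNIV. \<Sum>k\<in>UNIV. \<bar>sqrt (\<omega> i k)\<bar> * (M1 + M2) * norm (b i k))"
proof -
  have "norm (closed_loop E d b \<omega> \<phi> h1 h2 t p)
      \<le> (\<Sum>i\<in>UNIV. norm (\<Sum>k\<in>UNIV. ctrl E d \<omega> \<phi> h1 h2 i k t p *\<^sub>R b i k))"
    unfolding closed_loop_def
    using normvec_sum[of "\<chi> i. \<Sum>k\<in>UNIV. ctrl E d \<omega> \<phi> h1 h2 i k t p *\<^sub>R b i k"] by simp
  also have "\<dots> \<le> (\<Sum>i\<in>UNIV. \<Sum>k\<in>UNIV. \<bar>ctrl E d \<omega> \<phi> h1 h2 i k t p\<bar> * norm (b i k))"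
    by (intro sum_mono norm_sum_scaleR_le)
  also have "\<dots> \<le> (\<Sum>i\<in>UNIV. \<Sum>k\<in>UNIV. \<bar>sqrt (\<omega> i k)\<bar> * (M1 + M2) * norm (b i k))"
    by (intro sum_mono mult_right_mono ctrl_bound[OF assms]) auto
  finally show ?thesis .
qed

lemma cl_diff:
  "closed_loop E d b \<omega> \<phi> h1 h2 t p - closed_loop E d b \<omega> \<phi> h1 h2 t q
   = (\<chi> i. \<Sum>k\<in>UNIV. (ctrl E d \<omega> \<phi> h1 h2 i k t p - ctrl E d \<omega> \<phi> h1 h2 i k t q) *\<^sub>R b i k)"
  unfolding closed_loop_def by (simp add: vec_eq_iff sum_subtractf scaleR_diff_left)


theorem proposition4p6:
  fixes E :: "'v::finite set set"
    and d :: "'v set \<Rightarrow> real"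
    and b :: "'v \<Rightarrow> 'n::finite \<Rightarrow> real^'n"
    and \<omega> \<phi> :: "'v \<Rightarrow> 'n \<Rightarrow> real"
    and h1 h2 h1' h2' h1'' h2'' :: "real \<Rightarrow> real"
    and t0 :: real and p0 :: "(real^'n)^'v"
  assumes E_nonempty: "E \<noteq> {}"
    and E_edges: "\<forall>e\<in>E. card e = 2"
    and d_nonneg: "\<forall>e\<in>E. d e \<ge> 0"
    and b_orthonormal: "\<forall>i k l. b i k \<bullet> b i l = (if k = l then 1 else 0)"
    and \<omega>_pos: "\<forall>i k. \<omega> i k > 0"
    and \<omega>_distinct: "inj (\<lambda>(i, k). \<omega> i k)"
    and h1_adm: "admissible_h h1 h1' h1''"
    and h2_adm: "admissible_h h2 h2' h2''"
    and h_cond: "\<exists>r' c'. r' > 0 \<and> c' > 0 \<and>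
                   (\<forall>y. 0 < y \<and> y \<le> r' \<longrightarrow> h2' y * h1 y - h1' y * h2 y \<le> - c' * y)"
  shows "\<exists>x. x t0 = p0 \<and>
           (\<forall>t. (x has_vector_derivative closed_loop E d b \<omega> \<phi> h1 h2 t (x t)) (at t)) \<and>
           (\<forall>I y. is_interval I \<and> t0 \<in> I \<and> y t0 = p0 \<and>
                  (\<forall>t\<in>I. (y has_vector_derivative closed_loop E d b \<omega> \<phi> h1 h2 t (y t)) (at t within I))
                  \<longrightarrow> (\<forall>t\<in>I. y t = x t))"
  proof -
  let ?F = "closed_loop E d b \<omega> \<phi> h1 h2"
  obtain M1 where M1: "\<forall>y. \<bar>h1 y\<bar> \<le> M1" using h_bound[OF h1_adm] by blast
  obtain M2 where M2: "\<forall>y. \<bar>h2 y\<bar> \<le> M2" using h_bound[OF h2_adm] by blast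
  have cont: "continuous_on UNIV (\<lambda>t. ?F t (x t))" if xc: "continuous_on UNIV x" for x :: "real \<Rightarrow> (real^'n)^'v"
  proof -
    have c1: "continuous_on UNIV (\<lambda>t. h1 (psi E d i (x t)))" for i
      by (rule continuous_on_compose2[OF h_cont[OF h1_adm] continuous_on_compose2[OF psi_cont xc]]) auto
    have c2: "continuous_on UNIV (\<lambda>t. h2 (psi E d i (x t)))" for i
      by (rule continuous_on_compose2[OF h_cont[OF h2_adm] continuous_on_compose2[OF psi_cont xc]]) auto
    show ?thesis unfolding closed_loop_def ctrl_def by (intro continuous_intros c1 c2)
  qed
  have bnd: "norm (?F t p) \<le> (\<Sum>i\<in>UNIV. \<Sum>k\<in>UNIV. \<bar>sqrt (\<omega> i k)\<bar> * (M1 + M2) * norm (b i k))" for t p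
    by (rule cl_bound[OF M1 M2])
  have lip: "\<exists>L. \<forall>t p q. norm p \<le> R \<longrightarrow> norm q \<le> R \<longrightarrow> norm (?F t p - ?F t q) \<le> L * norm (p - q)" for R
  proof -
    have "\<forall>i. \<exists>K. \<forall>p::(real^'n)^'v. norm p \<le> R \<longrightarrow> \<bar>psi E d i p\<bar> \<le> K"
    proof
      fix i
      have "bounded (psi E d i ` cball (0::(real^'n)^'v) R)"
        by (intro compact_imp_bounded compact_continuous_image continuous_on_subset[OF psi_cont]) auto
      then obtain K where K: "\<forall>z\<in>psi E d i ` cball (0::(real^'n)^'v) R. norm z \<le> K"
        unfolding bounded_iff by blast
      show "\<exists>K. \<forall>p::(real^'n)^'v. norm p \<le> R \<longrightarrow> \<bar>psi E d i p\<bar> \<le> K"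
        using K by (intro exI[of _ K]) auto
    qed
    then obtain K where K: "\<forall>i (p::(real^'n)^'v). norm p \<le> R \<longrightarrow> \<bar>psi E d i p\<bar> \<le> K i" by metis
    have "\<forall>i. \<exists>L. \<forall>y z. \<bar>y\<bar> \<le> K i \<longrightarrow> \<bar>z\<bar> \<le> K i \<longrightarrow> \<bar>h1 y - h1 z\<bar> \<le> L * \<bar>y - z\<bar>"
      using h_lip[OF h1_adm] by blast
    then obtain L1 where L1: "\<forall>i y z. \<bar>y\<bar> \<le> K i \<longrightarrow> \<bar>z\<bar> \<le> K i \<longrightarrow> \<bar>h1 y - h1 z\<bar> \<le> L1 i * \<bar>y - z\<bar>" by metis
    have "\<forall>i. \<exists>L. \<forall>y z. \<bar>y\<bar> \<le> K i \<longrightarrow> \<bar>z\<bar> \<le> K i \<longrightarrow> \<bar>h2 y - h2 z\<bar> \<le> L * \<bar>y - z\<bar>"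
      using h_lip[OF h2_adm] by blast
    then obtain L2 where L2: "\<forall>i y z. \<bar>y\<bar> \<le> K i \<longrightarrow> \<bar>z\<bar> \<le> K i \<longrightarrow> \<bar>h2 y - h2 z\<bar> \<le> L2 i * \<bar>y - z\<bar>" by metis
    have "\<forall>i. \<exists>L. \<forall>p q :: (real^'n)^'v. norm p \<le> R \<longrightarrow> norm q \<le> R \<longrightarrow> \<bar>psi E d i p - psi E d i q\<bar> \<le> L * norm (p - q)"
      using psi_lip by blast
    then obtain LP where LP: "\<forall>i (p::(real^'n)^'v) q. norm p \<le> R \<longrightarrow> norm q \<le> R \<longrightarrow> \<bar>psi E d i p - psi E d i q\<bar> \<le> LP i * norm (p - q)"
      by metis
    define L where "L = (\<Sum>i\<in>UNIV. \<Sum>k\<in>UNIV. \<bar>sqrt (\<omega> i k)\<bar> * ((\<bar>L1 i\<bar> + \<bar>L2 i\<bar>) * \<bar>LP i\<bar>) * norm (b i k))"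
    show ?thesis
    proof (intro exI allI impI)
      fix t and p q :: "(real^'n)^'v" assume p: "norm p \<le> R" and q: "norm q \<le> R"
      have pl: "\<bar>psi E d i p - psi E d i q\<bar> \<le> \<bar>LP i\<bar> * norm (p - q)" for i
      proof -
        have "\<bar>psi E d i p - psi E d i q\<bar> \<le> LP i * norm (p - q)" using LP p q by blast
        also have "\<dots> \<le> \<bar>LP i\<bar> * norm (p - q)" by (intro mult_right_mono) auto
        finally show ?thesis .
      qed
      have hl1: "\<bar>h1 (psi E d i p) - h1 (psi E d i q)\<bar> \<le> \<bar>L1 i\<bar> * (\<bar>LP i\<bar> * norm (p - q))" for i
      proof -
        have "\<bar>h1 (psi E d i p) - h1 (psi E d i q)\<bar> \<le> L1 i * \<bar>psi E d i p - psi E d i q\<bar>"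
          using L1 K p q by blast
        also have "\<dots> \<le> \<bar>L1 i\<bar> * \<bar>psi E d i p - psi E d i q\<bar>" by (intro mult_right_mono) auto
        also have "\<dots> \<le> \<bar>L1 i\<bar> * (\<bar>LP i\<bar> * norm (p - q))" by (intro mult_left_mono pl) auto
        finally show ?thesis .
      qed
      have hl2: "\<bar>h2 (psi E d i p) - h2 (psi E d i q)\<bar> \<le> \<bar>L2 i\<bar> * (\<bar>LP i\<bar> * norm (p - q))" for i
      proof -
        have "\<bar>h2 (psi E d i p) - h2 (psi E d i q)\<bar> \<le> L2 i * \<bar>psi E d i p - psi E d i q\<bar>"
          using L2 K p q by blast
        also have "\<dots> \<le> \<bar>L2 i\<bar> * \<bar>psi E d i p - psi E d i q\<bar>" by (intro mult_right_mono) auto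
        also have "\<dots> \<le> \<bar>L2 i\<bar> * (\<bar>LP i\<bar> * norm (p - q))" by (intro mult_left_mono pl) auto
        finally show ?thesis .
      qed
      have cl: "\<bar>ctrl E d \<omega> \<phi> h1 h2 i k t p - ctrl E d \<omega> \<phi> h1 h2 i k t q\<bar>
          \<le> \<bar>sqrt (\<omega> i k)\<bar> * ((\<bar>L1 i\<bar> + \<bar>L2 i\<bar>) * \<bar>LP i\<bar>) * norm (p - q)" for i k
      proof -
        have "\<bar>ctrl E d \<omega> \<phi> h1 h2 i k t p - ctrl E d \<omega> \<phi> h1 h2 i k t q\<bar>
          \<le> \<bar>sqrt (\<omega> i k)\<bar> * (\<bar>h1 (psi E d i p) - h1 (psi E d i q)\<bar> + \<bar>h2 (psi E d i p) - h2 (psi E d i q)\<bar>)"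
          by (rule ctrl_lip)
        also have "\<dots> \<le> \<bar>sqrt (\<omega> i k)\<bar> * (\<bar>L1 i\<bar> * (\<bar>LP i\<bar> * norm (p - q)) + \<bar>L2 i\<bar> * (\<bar>LP i\<bar> * norm (p - q)))"
          by (intro mult_left_mono add_mono hl1 hl2) auto
        finally show ?thesis by (simp add: algebra_simps)
      qed
      have "norm (?F t p - ?F t q)
          \<le> (\<Sum>i\<in>UNIV. norm (\<Sum>k\<in>UNIV. (ctrl E d \<omega> \<phi> h1 h2 i k t p - ctrl E d \<omega> \<phi> h1 h2 i k t q) *\<^sub>R b i k))"
        unfolding cl_diff
        using normvec_sum[of "\<chi> i. \<Sum>k\<in>UNIV. (ctrl E d \<omega> \<phi> h1 h2 i k t p - ctrl E d \<omega> \<phi> h1 h2 i k t q) *\<^sub>R b i k"]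
        by simp
      also have "\<dots> \<le> (\<Sum>i\<in>UNIV. \<Sum>k\<in>UNIV. \<bar>ctrl E d \<omega> \<phi> h1 h2 i k t p - ctrl E d \<omega> \<phi> h1 h2 i k t q\<bar> * norm (b i k))"
        by (intro sum_mono norm_sum_scaleR_le)
      also have "\<dots> \<le> (\<Sum>i\<in>UNIV. \<Sum>k\<in>UNIV. (\<bar>sqrt (\<omega> i k)\<bar> * ((\<bar>L1 i\<bar> + \<bar>L2 i\<bar>) * \<bar>LP i\<bar>) * norm (p - q)) * norm (b i k))"
        by (intro sum_mono mult_right_mono cl) auto
      also have "\<dots> = L * norm (p - q)"
        unfolding L_def sum_distrib_right by (intro sum.cong refl) (simp add: algebra_simps)
      finally show "norm (?F t p - ?F t q) \<le> L * norm (p - q)" .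
    qed
  qed
  show ?thesis by (rule global_ode[OF cont bnd lip])
qed

end
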